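(* For all positive integers $n$ and $r$ with $n\geqslant r+1$, there exists a proper edge coloring $c: E(K_n)\to\mathbb{R}$ such that $\dim W_c(K_n, r)\geqslant\binom{r+1}{2}$.
   Context: All graphs are finite, simple and undirected; $K_n$ is the complete graph on $n$ vertices. For a positive integer $r$ and a graph $G$ with a proper edge coloring $c: E(G)\to\mathbb{R}$, $W_c(G,r)$ is the real vector space of all functions $\phi: E(G)\to\mathbb{R}$ for which there exist real polynomials $\{P_v(x)\}_{v\in V(G)}$ with $\deg P_v\leqslant r-1$ for every vertex $v$ and $P_u(c(uv))=P_v(c(uv))=\phi(uv)$ for every edge $uv\in E(G)$. *)

theory Defs
  imports "HOL-Analysis.Analysis" "HOL-Library.Function_Algebras"
          "HOL-Computational_Algebra.Polynomial"
begin

definition complete_graph_edges :: "nat \<Rightarrow> nat set set" where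
  "complete_graph_edges n = {{u, v} | u v. u < n \<and> v < n \<and> u \<noteq> v}"

definition proper_edge_coloring :: "'a set set \<Rightarrow> ('a set \<Rightarrow> real) \<Rightarrow> bool" where
  "proper_edge_coloring E c \<longleftrightarrow>
     (\<forall>e\<in>E. \<forall>f\<in>E. e \<noteq> f \<and> e \<inter> f \<noteq> {} \<longrightarrow> c e \<noteq> c f)"

text \<open>W_c(G,r): functions on the edge set (represented as functions that vanish
  outside E) admitting vertex polynomials of degree at most r-1 interpolating them.\<close>

definition W_space :: "'a set \<Rightarrow> 'a set set \<Rightarrow> ('a set \<Rightarrow> real) \<Rightarrow> nat \<Rightarrow> ('a set \<Rightarrow> real) set" where
  "W_space V E c r = {\<phi>. (\<forall>e. e \<notin> E \<longrightarrow> \<phi> e = 0) \<and>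
     (\<exists>P :: 'a \<Rightarrow> real poly. (\<forall>v\<in>V. degree (P v) \<le> r - 1) \<and>
        (\<forall>u\<in>V. \<forall>v\<in>V. {u, v} \<in> E \<longrightarrow>
            poly (P u) (c {u, v}) = \<phi> {u, v} \<and> poly (P v) (c {u, v}) = \<phi> {u, v}))}"

definition fun_dim :: "('a set \<Rightarrow> real) set \<Rightarrow> nat" where
  "fun_dim S = vector_space.dim (\<lambda>a f x. a * f x) S"

end

theory Submission
  imports Defs
begin

definition GG :: "nat \<Rightarrow> nat \<Rightarrow> nat \<Rightarrow> real \<Rightarrow> real" where
  "GG a b u t = (\<Prod>k<a. (real u - real k) * (t - real u - real k)) *
                (\<Prod>m\<in>{2*a+1..<a+b}. (t - real m))"

definition PP :: "nat \<Rightarrow> nat \<Rightarrow> nat \<Rightarrow> real poly" where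
  "PP a b u = (\<Prod>k<a. [: -((real u - real k) * (real u + real k)), real u - real k :]) *
                (\<Prod>m\<in>{2*a+1..<a+b}. [: - real m, 1 :])"

lemma poly_PP: "poly (PP a b u) t = GG a b u t"
  unfolding PP_def GG_def poly_mult poly_prod
  by (intro arg_cong2[where f="(*)"] prod.cong refl) (simp_all add: algebra_simps)

lemma degree_PP: assumes "a < b" shows "degree (PP a b u) \<le> b - 1"
proof -
  have d1: "degree (\<Prod>k<a. [: -((real u - real k) * (real u + real k)), real u - real k :]) \<le> a"
    apply (rule order_trans[OF degree_prod_sum_le], simp)
    apply (rule order_trans[OF sum_mono[where g="\<lambda>_. 1"]])
    by auto
  have d2: "degree (\<Prod>m\<in>{2*a+1..<a+b}. [: - real m, 1 :] :: real poly) \<le> b - a - 1"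
    apply (rule order_trans[OF degree_prod_sum_le], simp)
    apply (rule order_trans[OF sum_mono[where g="\<lambda>_. 1"]])
    by auto
  have "degree (PP a b u) \<le> a + (b - a - 1)"
    unfolding PP_def using degree_mult_le d1 d2 by (meson add_mono order_trans)
  then show ?thesis using assms by simp
qed

lemma GG_sym: "GG a b u (real u + real v) = GG a b v (real u + real v)"
proof -
  have "(\<Prod>k<a. (real u - real k) * (real u + real v - real u - real k)) =
        (\<Prod>k<a. (real v - real k) * (real u + real v - real v - real k))"
    by (intro prod.cong refl) (simp add: algebra_simps)
  then show ?thesis unfolding GG_def by simp
qed

lemma GG_zero1: assumes "u < a" shows "GG a b u t = 0"
  unfolding GG_def using assms by (auto intro!: bexI[of _ u])

lemma GG_zero2: assumes "a < v" "v < b" shows "GG a b a (real a + real v) = 0"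
  unfolding GG_def using assms by (auto intro!: bexI[of _ "a+v"])

lemma GG_nonzero: assumes "a < b" shows "GG a b a (real a + real b) \<noteq> 0"
  unfolding GG_def using assms by auto



lemma sum_fun_apply': "finite S \<Longrightarrow> (\<Sum>x\<in>S. h x) e = (\<Sum>x\<in>S. (h x) e)"
  by (induct rule: finite_induct) simp_all

lemma edge_of_K: "e \<in> complete_graph_edges n \<Longrightarrow> \<exists>u v. e = {u, v} \<and> u < v \<and> v < n"
proof -
  assume "e \<in> complete_graph_edges n"
  then obtain u v where "e = {u, v}" "u < n" "v < n" "u \<noteq> v"
    unfolding complete_graph_edges_def by blast
  then show ?thesis
  proof (cases "u < v")
    case True then show ?thesis using \<open>e = {u, v}\<close> \<open>u < n\<close> \<open>v < n\<close> by blast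
  next
    case False then have "v < u" using \<open>u \<noteq> v\<close> by simp
    moreover have "{u, v} = {v, u}" by (simp add: insert_commute)
    ultimately show ?thesis using \<open>e = {u, v}\<close> \<open>u < n\<close> \<open>v < n\<close> by metis
  qed
qed

lemma finite_K: "finite (complete_graph_edges n)"
proof -
  have "complete_graph_edges n \<subseteq> Pow {..<n}" unfolding complete_graph_edges_def by auto
  then show ?thesis by (rule finite_subset) simp
qed

lemma pair_I: "A \<subseteq> {..(r::nat)} \<Longrightarrow> card A = 2 \<Longrightarrow> \<exists>a b. A = {a, b} \<and> a < b \<and> b \<le> r"
proof -
  assume "A \<subseteq> {..r}" "card A = 2"
  then obtain u v where "A = {u, v}" "u \<le> r" "v \<le> r" "u \<noteq> v"
    unfolding card_2_iff by blast
  then show ?thesis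
  proof (cases "u < v")
    case True then show ?thesis using \<open>A = {u, v}\<close> \<open>u \<le> r\<close> \<open>v \<le> r\<close> by blast
  next
    case False then have "v < u" using \<open>u \<noteq> v\<close> by simp
    moreover have "{u, v} = {v, u}" by (simp add: insert_commute)
    ultimately show ?thesis using \<open>A = {u, v}\<close> \<open>u \<le> r\<close> \<open>v \<le> r\<close> by metis
  qed
qed

lemma sum_two: "u \<noteq> v \<Longrightarrow> \<Sum>{u, v::nat} = u + v" by simp

lemma Min2: "(u::nat) < v \<Longrightarrow> Min {u, v} = u" by auto
lemma Max2: "(u::nat) < v \<Longrightarrow> Max {u, v} = v" by auto


definition II :: "nat \<Rightarrow> nat set set" where
  "II r = {A. A \<subseteq> {..r} \<and> card A = 2}"

definition Phi :: "nat \<Rightarrow> nat set \<Rightarrow> nat set \<Rightarrow> real" where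
  "Phi n A = (\<lambda>e. if e \<in> complete_graph_edges n then GG (Min A) (Max A) (Min e) (real (\<Sum>e)) else 0)"

lemma edge_in_K: "u < v \<Longrightarrow> v < n \<Longrightarrow> {u, v} \<in> complete_graph_edges n"
  unfolding complete_graph_edges_def by force

lemma Phi_edge: "u < v \<Longrightarrow> v < n \<Longrightarrow> Phi n A {u, v} = GG (Min A) (Max A) u (real u + real v)"
  unfolding Phi_def using edge_in_K[of u v n] by (simp add: Min2)

lemma finite_II: "finite (II r)"
  unfolding II_def by (rule finite_subset[of _ "Pow {..r}"]) auto

lemma indep_core:
  assumes rn: "r < n"
    and hs: "\<forall>e\<in>complete_graph_edges n. (\<Sum>A\<in>II r. g A * Phi n A e) = 0"
  shows "\<forall>A\<in>II r. g A = 0"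
proof -
  have main: "g {a, b} = 0" if "a < b" "b \<le> r" for a b
    using that
  proof (induction a arbitrary: b rule: less_induct)
    case (less a)
    note outer = less.IH
    have "g {a, b} = 0" if "a < b" "b \<le> r" for b
      using that
    proof (induction b rule: less_induct)
      case (less b)
      note inner = less.IH
      define A where "A = {a, b}"
      have AI: "A \<in> II r" unfolding II_def A_def using less.prems by auto
      have bn: "b < n" using less.prems rn by simp
      have z: "g A' * Phi n A' {a, b} = 0" if A': "A' \<in> II r - {A}" for A'
      proof -
        obtain a' b' where ab': "A' = {a', b'}" "a' < b'" "b' \<le> r"
          using pair_I[of A' r] A' unfolding II_def by auto
        have ph: "Phi n A' {a, b} = GG a' b' a (real a + real b)"
          using Phi_edge[OF less.prems(1) bn] ab' by (simp add: Min2 Max2)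
        consider "a' < a" | "a' = a" "b' < b" | "a' = a" "b' = b" | "a < a'" | "a' = a" "b < b'"
          by linarith
        then show ?thesis
        proof cases
          case 1 then show ?thesis using outer[of a' b'] ab' by simp
        next
          case 2 then show ?thesis using inner[of b'] ab' by simp
        next
          case 3 then show ?thesis using A' ab' A_def by simp
        next
          case 4 then show ?thesis using ph GG_zero1 by simp
        next
          case 5 then show ?thesis using ph GG_zero2[of a b b'] less.prems by simp
        qed
      qed
      have "0 = (\<Sum>A'\<in>II r. g A' * Phi n A' {a, b})"
        using hs edge_in_K[OF less.prems(1) bn] by simp
      also have "\<dots> = g A * Phi n A {a, b} + (\<Sum>A'\<in>II r - {A}. g A' * Phi n A' {a, b})"
        using sum.remove[OF finite_II AI] by simp
      also have "\<dots> = g A * Phi n A {a, b}" using z by (simp add: sum.neutral)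
      also have "\<dots> = g A * GG a b a (real a + real b)"
        using Phi_edge[OF less.prems(1) bn] less.prems by (simp add: A_def Min2 Max2)
      finally show ?case using GG_nonzero[OF less.prems(1)] A_def by simp
    qed
    then show ?case using less.prems by blast
  qed
  show ?thesis
  proof
    fix A assume "A \<in> II r"
    then obtain a b where "A = {a, b}" "a < b" "b \<le> r" using pair_I unfolding II_def by blast
    then show "g A = 0" using main by blast
  qed
qed


lemma proper_c: "proper_edge_coloring (complete_graph_edges n) (\<lambda>e. real (\<Sum>e))"
  unfolding proper_edge_coloring_def
proof (intro ballI impI)
  fix e f assume e: "e \<in> complete_graph_edges n" and f: "f \<in> complete_graph_edges n"
    and ef: "e \<noteq> f \<and> e \<inter> f \<noteq> {}"
  obtain u v where uv: "e = {u, v}" "u < v" using edge_of_K[OF e] by blast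
  obtain u' v' where uv': "f = {u', v'}" "u' < v'" using edge_of_K[OF f] by blast
  show "real (\<Sum>e) \<noteq> real (\<Sum>f)"
  proof
    assume "real (\<Sum>e) = real (\<Sum>f)"
    then have "u + v = u' + v'" using uv uv' by simp
    then show False using ef uv uv' by auto
  qed
qed

lemma GG_min: "u \<noteq> v \<Longrightarrow> GG a b u (real u + real v) = GG a b (Min {u, v}) (real u + real v)"
proof -
  have "Min {u, v} = u \<or> Min {u, v} = v" by (simp add: min_def)
  then show ?thesis using GG_sym[of a b u v] by auto
qed

lemma Phi_in_W:
  assumes "A \<in> II r" "r \<ge> 1"
  shows "Phi n A \<in> W_space {..<n} (complete_graph_edges n) (\<lambda>e. real (\<Sum>e)) r"
proof -
  obtain a b where ab: "A = {a, b}" "a < b" "b \<le> r" using pair_I assms(1) unfolding II_def by blast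
  have mm: "Min A = a" "Max A = b" using ab by (simp_all add: Min2 Max2)
  show ?thesis
    unfolding W_space_def
  proof (intro CollectI conjI allI impI exI[of _ "PP a b"] ballI)
    fix e assume "e \<notin> complete_graph_edges n" then show "Phi n A e = 0" by (simp add: Phi_def)
  next
    fix v show "degree (PP a b v) \<le> r - 1" using degree_PP[OF ab(2), of v] ab by simp
  next
    fix u v assume uv: "{u, v} \<in> complete_graph_edges n"
    then have "u \<noteq> v" using edge_of_K[OF uv] by (metis doubleton_eq_iff less_irrefl)
    then have s: "real (\<Sum>{u, v}) = real u + real v" by simp
    have ph: "Phi n A {u, v} = GG a b (Min {u, v}) (real u + real v)"
      unfolding Phi_def using uv mm s by simp
    show "poly (PP a b u) (real (\<Sum>{u, v})) = Phi n A {u, v}"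
      using ph s poly_PP GG_min[OF \<open>u \<noteq> v\<close>] by simp
    show "poly (PP a b v) (real (\<Sum>{u, v})) = Phi n A {u, v}"
      using ph s poly_PP GG_min[of v u] \<open>u \<noteq> v\<close> by (simp add: insert_commute add.commute)
  qed
qed


theorem lemma3p3:
  fixes n r :: nat
  assumes "r \<ge> 1" and "n \<ge> r + 1"
  shows "\<exists>c. proper_edge_coloring (complete_graph_edges n) c \<and>
           fun_dim (W_space {..<n} (complete_graph_edges n) c r) \<ge> (r + 1) choose 2"
proof (intro exI conjI)
  let ?c = "\<lambda>e. real (\<Sum>e)"
  let ?E = "complete_graph_edges n"
  let ?W = "W_space {..<n} ?E ?c r"
  show "proper_edge_coloring ?E ?c" by (rule proper_c)
  interpret vs: vector_space "\<lambda>(a::real) (f::nat set \<Rightarrow> real) x. a * f x"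
    by unfold_locales (auto simp: algebra_simps fun_eq_iff)
  have rn: "r < n" using assms by simp
  define \<delta> where "\<delta> = (\<lambda>e::nat set. \<lambda>x::nat set. if x = e then (1::real) else 0)"
  have Wspan: "?W \<subseteq> vs.span (\<delta> ` ?E)"
  proof
    fix \<phi> assume "\<phi> \<in> ?W"
    then have z: "\<forall>e. e \<notin> ?E \<longrightarrow> \<phi> e = 0" unfolding W_space_def by blast
    have "\<phi> = (\<Sum>e\<in>?E. (\<lambda>x. \<phi> e * \<delta> e x))"
    proof
      fix x
      have "(\<Sum>e\<in>?E. (\<lambda>x. \<phi> e * \<delta> e x)) x = (\<Sum>e\<in>?E. \<phi> e * \<delta> e x)"
        by (rule sum_fun_apply'[OF finite_K, where h="\<lambda>e x. \<phi> e * \<delta> e x"])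
      also have "\<dots> = (\<Sum>e\<in>?E. if x = e then \<phi> e else 0)"
        by (intro sum.cong refl) (simp add: \<delta>_def)
      also have "\<dots> = \<phi> x" using z finite_K by (simp add: sum.delta)
      finally show "\<phi> x = (\<Sum>e\<in>?E. (\<lambda>x. \<phi> e * \<delta> e x)) x" by simp
    qed
    also have "\<dots> \<in> vs.span (\<delta> ` ?E)"
    proof (rule vs.span_sum)
      fix e assume e: "e \<in> ?E"
      have "\<delta> e \<in> vs.span (\<delta> ` ?E)" by (rule vs.span_base) (use e in simp)
      from vs.span_scale[OF this, of "\<phi> e"] show "(\<lambda>x. \<phi> e * \<delta> e x) \<in> vs.span (\<delta> ` ?E)" .
    qed
    finally show "\<phi> \<in> vs.span (\<delta> ` ?E)" .
  qed
  have inj: "inj_on (Phi n) (II r)"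
  proof
    fix A A' assume A: "A \<in> II r" and A': "A' \<in> II r" and eq: "Phi n A = Phi n A'"
    show "A = A'"
    proof (rule ccontr)
      assume ne: "A \<noteq> A'"
      define g where "g X = (if X = A then 1 else if X = A' then -1 else (0::real))" for X
      have "\<forall>e\<in>?E. (\<Sum>X\<in>II r. g X * Phi n X e) = 0"
      proof
        fix e
        have "(\<Sum>X\<in>II r. g X * Phi n X e) =
              (\<Sum>X\<in>II r. (if X = A then Phi n A e else 0) - (if X = A' then Phi n A' e else 0))"
          by (intro sum.cong refl) (use ne in \<open>auto simp: g_def\<close>)
        also have "\<dots> = 0" using A A' eq finite_II by (simp add: sum_subtractf sum.delta)
        finally show "(\<Sum>X\<in>II r. g X * Phi n X e) = 0" .
      qed
      then have "g A = 0" using indep_core[OF rn] A by blast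
      then show False by (simp add: g_def)
    qed
  qed
  have indep: "vs.independent (Phi n ` II r)"
  proof (rule vs.independent_if_scalars_zero)
    show "finite (Phi n ` II r)" using finite_II by simp
  next
    fix f x assume h: "(\<Sum>x\<in>Phi n ` II r. (\<lambda>y. f x * x y)) = 0" and x: "x \<in> Phi n ` II r"
    have "(\<Sum>A\<in>II r. (\<lambda>y. f (Phi n A) * Phi n A y)) = 0"
      using h sum.reindex[OF inj, of "\<lambda>x. (\<lambda>y. f x * x y)"] by simp
    then have "\<forall>e\<in>?E. (\<Sum>A\<in>II r. (f \<circ> Phi n) A * Phi n A e) = 0"
    proof (intro ballI)
      fix e
      assume h0: "(\<Sum>A\<in>II r. (\<lambda>y. f (Phi n A) * Phi n A y)) = 0"
      have "(\<Sum>A\<in>II r. (\<lambda>y. f (Phi n A) * Phi n A y)) e = (\<Sum>A\<in>II r. f (Phi n A) * Phi n A e)"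
        by (rule sum_fun_apply'[OF finite_II, where h="\<lambda>A y. f (Phi n A) * Phi n A y"])
      then show "(\<Sum>A\<in>II r. (f \<circ> Phi n) A * Phi n A e) = 0" using h0 by simp
    qed
    then have "\<forall>A\<in>II r. (f \<circ> Phi n) A = 0" using indep_core[OF rn] by blast
    then show "f x = 0" using x by auto
  qed
  have sub: "Phi n ` II r \<subseteq> ?W" using Phi_in_W assms(1) by blast
  obtain B where B: "B \<subseteq> ?W" "vs.independent B" "?W \<subseteq> vs.span B" "card B = vs.dim ?W"
    using vs.basis_exists by blast
  have "finite B" using vs.independent_span_bound[of "\<delta> ` ?E" B] finite_K B Wspan by auto
  then have "card (Phi n ` II r) \<le> card B"
    using vs.independent_span_bound[of B "Phi n ` II r"] indep sub B by auto
  moreover have "card (Phi n ` II r) = (r + 1) choose 2"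
    using card_image[OF inj] n_subsets[of "{..r}" 2] unfolding II_def by simp
  ultimately show "fun_dim ?W \<ge> (r + 1) choose 2"
    unfolding fun_dim_def using B by simp
qed

end
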